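(* Let $(X,\pi)$ be a symmetric two-player game with relative payoff game $(X,\Delta)$. If $(X,\Delta)$ does not contain a strict improvement cycle, then it does not contain an imitation cycle.
   Context: $\pi(x,y)$ is the payoff of the player choosing $x$ against $y$; $\Delta(x,y)=\pi(x,y)-\pi(y,x)$. In the two-player game $(X,\Delta)$, at a profile $(x,y)\in X\times X$ player 1 gets $\Delta(x,y)$ and player 2 gets $\Delta(y,x)$. A sequential path is a sequence of profiles in which consecutive profiles differ in exactly one player's action; it is a strict improvement path if at each step the player who switches strictly increases her own payoff; a strict improvement cycle is a finite strict improvement path $(x_0,y_0),\dots,(x_m,y_m)$ with $(x_0,y_0)=(x_m,y_m)$. A cycle is a finite sequence of profiles $(x_0,y_0),\dots,(x_n,y_n)$, not all equal, with $(x_0,y_0)=(x_n,y_n)$; it is an imitation cycle if for all consecutive profiles $(x_t,y_t),(x_{t+1},y_{t+1})$ on it, $\Delta(x_t,y_t)>0$ and $y_{t+1}=x_t$. *)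

theory Defs
  imports Complex_Main
begin

definition Delta :: "('a \<Rightarrow> 'a \<Rightarrow> real) \<Rightarrow> 'a \<Rightarrow> 'a \<Rightarrow> real" where
  "Delta \<pi> x y = \<pi> x y - \<pi> y x"

text \<open>Two-player game (X,u): at profile (x,y) player 1 gets u x y, player 2 gets u y x.
  A path is a function p on indices 0..m with p t \<in> X \<times> X.\<close>

definition strict_improvement_step :: "('a \<Rightarrow> 'a \<Rightarrow> real) \<Rightarrow> 'a \<times> 'a \<Rightarrow> 'a \<times> 'a \<Rightarrow> bool" where
  "strict_improvement_step u a b \<longleftrightarrow>
     (fst b \<noteq> fst a \<and> snd b = snd a \<and> u (fst b) (snd a) > u (fst a) (snd a)) \<or>
     (fst b = fst a \<and> snd b \<noteq> snd a \<and> u (snd b) (fst a) > u (snd a) (fst a))"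

definition strict_improvement_cycle ::
  "'a set \<Rightarrow> ('a \<Rightarrow> 'a \<Rightarrow> real) \<Rightarrow> (nat \<Rightarrow> 'a \<times> 'a) \<Rightarrow> nat \<Rightarrow> bool" where
  "strict_improvement_cycle X u p m \<longleftrightarrow>
     0 < m \<and> (\<forall>t\<le>m. p t \<in> X \<times> X) \<and> p 0 = p m \<and>
     (\<forall>t<m. strict_improvement_step u (p t) (p (Suc t)))"

definition imitation_cycle ::
  "'a set \<Rightarrow> ('a \<Rightarrow> 'a \<Rightarrow> real) \<Rightarrow> (nat \<Rightarrow> 'a \<times> 'a) \<Rightarrow> nat \<Rightarrow> bool" where
  "imitation_cycle X u p n \<longleftrightarrow>
     (\<forall>t\<le>n. p t \<in> X \<times> X) \<and> p 0 = p n \<and> (\<exists>s\<le>n. \<exists>t\<le>n. p s \<noteq> p t) \<and>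
     (\<forall>t<n. u (fst (p t)) (snd (p t)) > 0 \<and> snd (p (Suc t)) = fst (p t))"

end

theory Submission
  imports Defs
begin

theorem lemma4:
  fixes X :: "'a set" and \<pi> :: "'a \<Rightarrow> 'a \<Rightarrow> real"
  assumes "\<not> (\<exists>p m. strict_improvement_cycle X (Delta \<pi>) p m)"
  shows "\<not> (\<exists>p n. imitation_cycle X (Delta \<pi>) p n)"
proof
  assume "\<exists>p n. imitation_cycle X (Delta \<pi>) p n"
  then obtain p n where ic: "imitation_cycle X (Delta \<pi>) p n" by blast
  have mem: "\<And>t. t \<le> n \<Longrightarrow> p t \<in> X \<times> X" and p0: "p 0 = p n"
    and ne: "\<exists>s\<le>n. \<exists>t\<le>n. p s \<noteq> p t"
    and st: "\<And>t. t < n \<Longrightarrow> Delta \<pi> (fst (p t)) (snd (p t)) > 0 \<and> snd (p (Suc t)) = fst (p t)"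
    using ic unfolding imitation_cycle_def by auto
  have npos: "0 < n" using ne by (metis le_zero_eq neq0_conv)
  have dxx: "\<And>x. Delta \<pi> x x = 0" by (simp add: Delta_def)
  have anti: "\<And>x y. Delta \<pi> y x = - Delta \<pi> x y" by (simp add: Delta_def)
  define q where "q k = (if even k then p (k div 2) else (fst (p (k div 2)), fst (p (k div 2))))" for k
  have "strict_improvement_cycle X (Delta \<pi>) q (2*n)"
    unfolding strict_improvement_cycle_def
  proof (intro conjI allI impI)
    show "0 < 2*n" using npos by simp
  next
    fix t assume "t \<le> 2*n"
    hence "t div 2 \<le> n" by simp
    thus "q t \<in> X \<times> X" using mem[of "t div 2"] unfolding q_def by (auto simp: mem_Times_iff)
  next
    show "q 0 = q (2*n)" using p0 by (simp add: q_def)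
  next
    fix k assume k: "k < 2*n"
    show "strict_improvement_step (Delta \<pi>) (q k) (q (Suc k))"
    proof (cases "even k")
      case True
      then obtain t where kt: "k = 2*t" by blast
      hence tn: "t < n" using k by simp
      have pos: "Delta \<pi> (fst (p t)) (snd (p t)) > 0" using st[OF tn] by blast
      hence neq: "snd (p t) \<noteq> fst (p t)" using dxx by force
      have "q k = p t" "q (Suc k) = (fst (p t), fst (p t))" using kt by (auto simp: q_def)
      thus ?thesis using pos neq unfolding strict_improvement_step_def
        by (simp add: dxx anti[of "fst (p t)" "snd (p t)"])
    next
      case False
      then obtain t where kt: "k = 2*t+1" by (metis oddE)
      hence tn: "Suc t < n \<or> Suc t = n" using k by linarith
      have tn': "t < n" using k kt by simp
      have sn: "snd (p (Suc t)) = fst (p t)" using st[OF tn'] by blast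
      have pos: "Delta \<pi> (fst (p (Suc t))) (snd (p (Suc t))) > 0"
      proof (cases "Suc t < n")
        case True thus ?thesis using st by blast
      next
        case False
        hence "Suc t = n" using tn by simp
        hence "p (Suc t) = p 0" using p0 by simp
        thus ?thesis using st[OF npos] by simp
      qed
      hence neq: "fst (p (Suc t)) \<noteq> fst (p t)" using dxx sn by force
      have "q k = (fst (p t), fst (p t))" "q (Suc k) = p (Suc t)" using kt by (auto simp: q_def)
      thus ?thesis using pos neq sn unfolding strict_improvement_step_def
        by (simp add: dxx)
    qed
  qed
  thus False using assms by blast
qed

end
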